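(* Let $T$ be a decomposition tree of a distance-hereditary graph $G$, and let $v$ be an internal node of $T$ labeled $\oplus$ with left child $v_l$ and right child $v_r$, such that property (P) holds at $v_l$ and at $v_r$. Assume $\hat\alpha(v_r)>\hat\beta(v_l)$. Then $\hat\beta(v)=0$.
   Context: All graphs are finite, simple, undirected. For a graph $H$ and $S\subseteq V(H)$, $N_H[S]$ is $S$ together with all vertices adjacent to a vertex of $S$, and $H[S]$ is the induced subgraph. Graphs carry a "twin set": a single-vertex graph on $x$ has twin set $\{x\}$. For vertex-disjoint graphs $G_l,G_r$ with twin sets $TS(G_l),TS(G_r)$: the true twin operation $G_l\otimes G_r$ has vertex set $V(G_l)\cup V(G_r)$, edge set $E(G_l)\cup E(G_r)\cup\{uw: u\in TS(G_l), w\in TS(G_r)\}$ and twin set $TS(G_l)\cup TS(G_r)$; the false twin operation $G_l\odot G_r$ has vertex set $V(G_l)\cup V(G_r)$, edge set $E(G_l)\cup E(G_r)$, twin set $TS(G_l)\cup TS(G_r)$; the attachment operation $G_l\oplus G_r$ has the same vertex and edge sets as $G_l\otimes G_r$ and twin set $TS(G_l)$. A decomposition tree $T$ of $G$ is a rooted binary tree whose leaves are in bijection with $V(G)$, each internal node having a left and a right child and a label in $\{\otimes,\odot,\oplus\}$; for each node $v$ define $\hat G(v)$ and $\hat{TS}(v)$ recursively: for a leaf $x$, the single-vertex graph on $x$ with twin set $\{x\}$; for an internal node $v$ with label $\circ$ and children $v_l,v_r$, $\hat G(v)=\hat G(v_l)\circ\hat G(v_r)$ with the corresponding twin set; one requires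 $\hat G(\text{root})=G$. Then $\hat G(v)$ is the subgraph of $G$ induced by the set $\hat V(v)$ of leaves below $v$. For a node $u$ and $0\le k\le|\hat{TS}(u)|$, call $S\subseteq\hat V(u)$ $k$-feasible if $\hat V(u)\setminus\hat{TS}(u)\subseteq N_{\hat G(u)}[S]$ and there is $X\subseteq S\cap\hat{TS}(u)$ with $|X|=k$ such that $\hat G(u)[S\setminus X]$ has a perfect matching. $\hat\gamma_k(u)$ is the minimum size of a $k$-feasible set. $\hat{min}(u)=\min\{\hat\gamma_k(u):0\le k\le|\hat{TS}(u)|\}$, and $\hat\alpha(u)$, $\hat\beta(u)$ are the smallest and the largest $k$ with $\hat\gamma_k(u)=\hat{min}(u)$. Property (P) holds at $u$ if for every $0\le k\le|\hat{TS}(u)|$: $\hat\gamma_k(u)=\hat{min}(u)+\hat\alpha(u)-k$ when $k\le\hat\alpha(u)$; $\hat\gamma_k(u)=\hat{min}(u)+k-\hat\beta(u)$ when $k\ge\hat\beta(u)$; $\hat\gamma_k(u)=\hat{min}(u)$ when $\hat\alpha(u)<k<\hat\beta(u)$ and $k-\hat\alpha(u)$ is even; and $\hat\gamma_k(u)=\hat{min}(u)+1$ otherwise. *)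

theory Defs
  imports "HOL-Library.Extended_Nat"
begin

(* Graphs: a vertex set V and a set E of edges, each edge a 2-element set {u,w}. *)

datatype dlabel = TrueTwin | FalseTwin | Attach

datatype 'a dtree = Leaf 'a | Node dlabel "'a dtree" "'a dtree"

fun hV :: "'a dtree \<Rightarrow> 'a set" where
  "hV (Leaf x) = {x}"
| "hV (Node _ l r) = hV l \<union> hV r"

fun hTS :: "'a dtree \<Rightarrow> 'a set" where
  "hTS (Leaf x) = {x}"
| "hTS (Node TrueTwin l r) = hTS l \<union> hTS r"
| "hTS (Node FalseTwin l r) = hTS l \<union> hTS r"
| "hTS (Node Attach l r) = hTS l"

fun hE :: "'a dtree \<Rightarrow> 'a set set" where
  "hE (Leaf x) = {}"
| "hE (Node TrueTwin l r) = hE l \<union> hE r \<union> {{u, w} | u w. u \<in> hTS l \<and> w \<in> hTS r}"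
| "hE (Node FalseTwin l r) = hE l \<union> hE r"
| "hE (Node Attach l r) = hE l \<union> hE r \<union> {{u, w} | u w. u \<in> hTS l \<and> w \<in> hTS r}"

(* leaves of left and right subtrees are disjoint at every node: leaves in bijection with vertices *)
fun wf_dtree :: "'a dtree \<Rightarrow> bool" where
  "wf_dtree (Leaf x) = True"
| "wf_dtree (Node _ l r) = (wf_dtree l \<and> wf_dtree r \<and> hV l \<inter> hV r = {})"

fun subtrees :: "'a dtree \<Rightarrow> 'a dtree set" where
  "subtrees (Leaf x) = {Leaf x}"
| "subtrees (Node c l r) = insert (Node c l r) (subtrees l \<union> subtrees r)"

definition decomp_tree :: "'a dtree \<Rightarrow> 'a set \<Rightarrow> 'a set set \<Rightarrow> bool" where
  "decomp_tree T V E \<longleftrightarrow> wf_dtree T \<and> hV T = V \<and> hE T = E"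

definition is_path_len :: "'a set \<Rightarrow> 'a set set \<Rightarrow> 'a \<Rightarrow> 'a \<Rightarrow> nat \<Rightarrow> bool" where
  "is_path_len S E u w n \<longleftrightarrow> (\<exists>xs. length xs = Suc n \<and> hd xs = u \<and> last xs = w \<and> set xs \<subseteq> S
      \<and> (\<forall>i < n. {xs ! i, xs ! Suc i} \<in> E))"

definition dist_in :: "'a set \<Rightarrow> 'a set set \<Rightarrow> 'a \<Rightarrow> 'a \<Rightarrow> nat" where
  "dist_in S E u w = (LEAST n. is_path_len S E u w n)"

definition connected_in :: "'a set \<Rightarrow> 'a set set \<Rightarrow> bool" where
  "connected_in S E \<longleftrightarrow> (\<forall>u\<in>S. \<forall>w\<in>S. \<exists>n. is_path_len S E u w n)"

definition distance_hereditary :: "'a set \<Rightarrow> 'a set set \<Rightarrow> bool" where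
  "distance_hereditary V E \<longleftrightarrow> (\<forall>S \<subseteq> V. connected_in S E \<longrightarrow>
      (\<forall>u\<in>S. \<forall>w\<in>S. dist_in S E u w = dist_in V E u w))"

definition cnbhd :: "'a dtree \<Rightarrow> 'a set \<Rightarrow> 'a set" where
  "cnbhd v S = S \<union> {w \<in> hV v. \<exists>s\<in>S. {s, w} \<in> hE v}"

definition has_pm :: "'a dtree \<Rightarrow> 'a set \<Rightarrow> bool" where
  "has_pm v W \<longleftrightarrow> (\<exists>M. M \<subseteq> hE v \<and> (\<forall>e\<in>M. e \<subseteq> W)
      \<and> (\<forall>e\<in>M. \<forall>e'\<in>M. e \<noteq> e' \<longrightarrow> e \<inter> e' = {}) \<and> \<Union>M = W)"

definition k_feasible :: "'a dtree \<Rightarrow> nat \<Rightarrow> 'a set \<Rightarrow> bool" where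
  "k_feasible v k S \<longleftrightarrow> S \<subseteq> hV v \<and> hV v - hTS v \<subseteq> cnbhd v S
      \<and> (\<exists>X. X \<subseteq> S \<inter> hTS v \<and> card X = k \<and> has_pm v (S - X))"

(* minimum size of a k-feasible set (\<infinity> if none exists) *)
definition hgamma :: "nat \<Rightarrow> 'a dtree \<Rightarrow> enat" where
  "hgamma k v = (INF S \<in> {S. k_feasible v k S}. enat (card S))"

definition hmin :: "'a dtree \<Rightarrow> enat" where
  "hmin v = Min ((\<lambda>k. hgamma k v) ` {0..card (hTS v)})"

definition halpha :: "'a dtree \<Rightarrow> nat" where
  "halpha v = Min {k. k \<le> card (hTS v) \<and> hgamma k v = hmin v}"

definition hbeta :: "'a dtree \<Rightarrow> nat" where
  "hbeta v = Max {k. k \<le> card (hTS v) \<and> hgamma k v = hmin v}"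

definition prop_P :: "'a dtree \<Rightarrow> bool" where
  "prop_P v \<longleftrightarrow> (\<forall>k \<le> card (hTS v).
      (k \<le> halpha v \<longrightarrow> hgamma k v = hmin v + enat (halpha v - k))
    \<and> (k \<ge> hbeta v \<longrightarrow> hgamma k v = hmin v + enat (k - hbeta v))
    \<and> (halpha v < k \<and> k < hbeta v \<and> even (k - halpha v) \<longrightarrow> hgamma k v = hmin v)
    \<and> (\<not> (k \<le> halpha v) \<and> \<not> (k \<ge> hbeta v) \<and> \<not> (halpha v < k \<and> k < hbeta v \<and> even (k - halpha v))
         \<longrightarrow> hgamma k v = hmin v + 1))"

end

theory Submission
  imports Defs
begin


lemma hV_finite: "finite (hV u)"
  by (induction u) auto

lemma hTS_sub: "hTS u \<subseteq> hV u"
proof (induction u)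
  case (Leaf x) then show ?case by simp
next
  case (Node c l r) then show ?case by (cases c) auto
qed

lemma hTS_ne: "hTS u \<noteq> {}"
proof (induction u)
  case (Leaf x) then show ?case by simp
next
  case (Node c l r) then show ?case by (cases c) auto
qed

lemma hE_sub: "e \<in> hE u \<Longrightarrow> e \<subseteq> hV u"
proof (induction u arbitrary: e)
  case (Leaf x) then show ?case by simp
next
  case (Node c l r)
  have "e \<in> hE l \<union> hE r \<union> {{u, w} | u w. u \<in> hTS l \<and> w \<in> hTS r}"
    using Node.prems by (cases c) auto
  then consider "e \<in> hE l" | "e \<in> hE r" | u w where "e = {u, w}" "u \<in> hTS l" "w \<in> hTS r" by blast
  then show ?case
  proof cases
    case 1 then show ?thesis using Node.IH(1) by auto
  next
    case 2 then show ?thesis using Node.IH(2) by auto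
  next
    case 3 then show ?thesis using hTS_sub[of l] hTS_sub[of r] by auto
  qed
qed

lemma hE_l: "hE l \<subseteq> hE (Node c l r)" by (cases c) auto
lemma hE_r: "hE r \<subseteq> hE (Node c l r)" by (cases c) auto

lemma hE_attach: "hE (Node Attach l r) = hE l \<union> hE r \<union> {{u, w} | u w. u \<in> hTS l \<and> w \<in> hTS r}"
  by simp

lemma cnbhd_mono: "hV l \<subseteq> hV u \<Longrightarrow> hE l \<subseteq> hE u \<Longrightarrow> A \<subseteq> B \<Longrightarrow> cnbhd l A \<subseteq> cnbhd u B"
proof
  fix x assume h: "hV l \<subseteq> hV u" "hE l \<subseteq> hE u" "A \<subseteq> B" and "x \<in> cnbhd l A"
  then consider "x \<in> A" | s where "x \<in> hV l" "s \<in> A" "{s, x} \<in> hE l" unfolding cnbhd_def by blast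
  then show "x \<in> cnbhd u B"
  proof cases
    case 1 then show ?thesis using h unfolding cnbhd_def by blast
  next
    case 2 then have "x \<in> hV u" "s \<in> B" "{s, x} \<in> hE u" using h by blast+
    then show ?thesis unfolding cnbhd_def by blast
  qed
qed

lemma has_pm_intro: "(\<forall>e\<in>M. \<forall>e'\<in>M. e \<noteq> e' \<longrightarrow> e \<inter> e' = {}) \<Longrightarrow> M \<subseteq> hE u \<Longrightarrow> (\<forall>e\<in>M. e \<subseteq> W) \<Longrightarrow> \<Union>M = W \<Longrightarrow> has_pm u W"
  unfolding has_pm_def by metis

lemma has_pm_mono: "hE l \<subseteq> hE u \<Longrightarrow> has_pm l W \<Longrightarrow> has_pm u W"
proof -
  assume a: "hE l \<subseteq> hE u" "has_pm l W"
  then obtain M where m: "M \<subseteq> hE l" "\<forall>e\<in>M. e \<subseteq> W" "\<forall>e\<in>M. \<forall>e'\<in>M. e \<noteq> e' \<longrightarrow> e \<inter> e' = {}" "\<Union>M = W"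
    unfolding has_pm_def by blast
  have "M \<subseteq> hE u" using m(1) a(1) by (rule order_trans)
  then show ?thesis using m by (intro has_pm_intro) auto
qed

lemma has_pm_empty: "has_pm u {}"
  unfolding has_pm_def by (rule exI[of _ "{}"]) simp

lemma has_pm_union: "has_pm u A \<Longrightarrow> has_pm u B \<Longrightarrow> A \<inter> B = {} \<Longrightarrow> has_pm u (A \<union> B)"
proof -
  assume "has_pm u A" "has_pm u B" and d: "A \<inter> B = {}"
  obtain M1 where m1: "M1 \<subseteq> hE u" "\<forall>e\<in>M1. e \<subseteq> A" "\<forall>e\<in>M1. \<forall>e'\<in>M1. e \<noteq> e' \<longrightarrow> e \<inter> e' = {}" "\<Union>M1 = A"
    using \<open>has_pm u A\<close> unfolding has_pm_def by blast
  obtain M2 where m2: "M2 \<subseteq> hE u" "\<forall>e\<in>M2. e \<subseteq> B" "\<forall>e\<in>M2. \<forall>e'\<in>M2. e \<noteq> e' \<longrightarrow> e \<inter> e' = {}" "\<Union>M2 = B"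
    using \<open>has_pm u B\<close> unfolding has_pm_def by blast
  have "\<forall>e\<in>M1 \<union> M2. \<forall>e'\<in>M1 \<union> M2. e \<noteq> e' \<longrightarrow> e \<inter> e' = {}"
  proof (intro ballI impI)
    fix e e' assume e: "e \<in> M1 \<union> M2" and e': "e' \<in> M1 \<union> M2" and ne: "e \<noteq> e'"
    show "e \<inter> e' = {}"
    proof (cases "e \<in> M1")
      case True
      show ?thesis
      proof (cases "e' \<in> M1")
        case True then show ?thesis using \<open>e \<in> M1\<close> m1(3) ne by blast
      next
        case False then have "e' \<subseteq> B" using e' m2(2) by blast
        moreover have "e \<subseteq> A" using True m1(2) by blast
        ultimately show ?thesis using d by blast
      qed
    next
      case False
      then have eB: "e \<in> M2" using e by blast
      show ?thesis
      proof (cases "e' \<in> M2")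
        case True then show ?thesis using eB m2(3) ne by blast
      next
        case False then have "e' \<subseteq> A" using e' m1(2) by blast
        moreover have "e \<subseteq> B" using eB m2(2) by blast
        ultimately show ?thesis using d by blast
      qed
    qed
  qed
  moreover have "M1 \<union> M2 \<subseteq> hE u" using m1(1) m2(1) by blast
  moreover have "\<forall>e\<in>M1 \<union> M2. e \<subseteq> A \<union> B" using m1(2) m2(2) by blast
  moreover have "\<Union>(M1 \<union> M2) = A \<union> B" using m1(4) m2(4) by simp
  ultimately show ?thesis by (rule has_pm_intro)
qed

lemma has_pm_pairs:
  assumes "A \<subseteq> hTS l" "B \<subseteq> hTS r" "A \<inter> B = {}" "finite A" "finite B" "card A = card B"
  shows "has_pm (Node Attach l r) (A \<union> B)"
proof -
  have "\<exists>h. bij_betw h A B" by (rule finite_same_card_bij[OF assms(4,5,6)])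
  then obtain h where h: "bij_betw h A B" by blast
  define M where "M = (\<lambda>x. {x, h x}) ` A"
  have hB: "\<And>x. x \<in> A \<Longrightarrow> h x \<in> B" using h bij_betwE by blast
  have inj: "\<And>x y. x \<in> A \<Longrightarrow> y \<in> A \<Longrightarrow> h x = h y \<Longrightarrow> x = y" using h by (auto simp: bij_betw_def inj_on_def)
  have d: "\<And>x. x \<in> A \<Longrightarrow> x \<notin> B" using assms(3) by blast
  have "\<forall>e\<in>M. \<forall>e'\<in>M. e \<noteq> e' \<longrightarrow> e \<inter> e' = {}"
  proof (intro ballI impI)
    fix e e' assume "e \<in> M" "e' \<in> M" "e \<noteq> e'"
    then obtain x y where xy: "x \<in> A" "y \<in> A" "e = {x, h x}" "e' = {y, h y}" "x \<noteq> y"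
      unfolding M_def by blast
    have "h x \<noteq> h y" using inj xy by blast
    moreover have "x \<noteq> h y" using d hB xy by metis
    moreover have "h x \<noteq> y" using d hB xy by metis
    ultimately show "e \<inter> e' = {}" using xy by auto
  qed
  moreover have "M \<subseteq> hE (Node Attach l r)"
  proof
    fix e assume "e \<in> M"
    then obtain x where "x \<in> A" "e = {x, h x}" unfolding M_def by blast
    then have "x \<in> hTS l" "h x \<in> hTS r" "e = {x, h x}" using assms hB by blast+
    then have "e \<in> {{u, w} | u w. u \<in> hTS l \<and> w \<in> hTS r}" by blast
    then show "e \<in> hE (Node Attach l r)" by simp
  qed
  moreover have "\<forall>e\<in>M. e \<subseteq> A \<union> B" unfolding M_def using hB by blast
  moreover have "\<Union>M = A \<union> B"
  proof
    show "\<Union>M \<subseteq> A \<union> B" unfolding M_def using hB by blast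
    show "A \<union> B \<subseteq> \<Union>M"
    proof
      fix y assume "y \<in> A \<union> B"
      then show "y \<in> \<Union>M"
      proof
        assume "y \<in> A" then show ?thesis unfolding M_def by blast
      next
        assume "y \<in> B" then obtain x where "x \<in> A" "y = h x" using h by (metis bij_betw_imp_surj_on imageE)
        then show ?thesis unfolding M_def by blast
      qed
    qed
  qed
  ultimately show ?thesis by (rule has_pm_intro)
qed

lemma wf_sub: "u \<in> subtrees T \<Longrightarrow> wf_dtree T \<Longrightarrow> wf_dtree u"
  by (induction T) auto



definition finv where "finv u S X \<longleftrightarrow> hTS u \<subseteq> S \<and> S \<subseteq> hV u \<and> X \<subseteq> hTS u \<and> hV u - hTS u \<subseteq> cnbhd u (S - X) \<and> has_pm u (S - X)"

lemma cnbhd_self: "A \<subseteq> cnbhd u A" unfolding cnbhd_def by blast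

lemma inv_twin:
  assumes l: "finv l Sl Xl" and r: "finv r Sr Xr" and D: "hV l \<inter> hV r = {}"
    and ts: "hTS u = hTS l \<union> hTS r" and vv: "hV u = hV l \<union> hV r" and el: "hE l \<subseteq> hE u" and er: "hE r \<subseteq> hE u"
  shows "finv u (Sl \<union> Sr) (Xl \<union> Xr)"
proof -
  have l1: "hTS l \<subseteq> Sl" "Sl \<subseteq> hV l" "Xl \<subseteq> hTS l" "hV l - hTS l \<subseteq> cnbhd l (Sl - Xl)" "has_pm l (Sl - Xl)"
    using l unfolding finv_def by auto
  have r1: "hTS r \<subseteq> Sr" "Sr \<subseteq> hV r" "Xr \<subseteq> hTS r" "hV r - hTS r \<subseteq> cnbhd r (Sr - Xr)" "has_pm r (Sr - Xr)"
    using r unfolding finv_def by auto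
  have eq: "(Sl \<union> Sr) - (Xl \<union> Xr) = (Sl - Xl) \<union> (Sr - Xr)" using l1 r1 D hTS_sub[of l] hTS_sub[of r] by blast
  have c1: "cnbhd l (Sl - Xl) \<subseteq> cnbhd u ((Sl \<union> Sr) - (Xl \<union> Xr))"
    by (rule cnbhd_mono) (use eq el vv in auto)
  have c2: "cnbhd r (Sr - Xr) \<subseteq> cnbhd u ((Sl \<union> Sr) - (Xl \<union> Xr))"
    by (rule cnbhd_mono) (use eq er vv in auto)
  have dom: "hV u - hTS u \<subseteq> cnbhd u ((Sl \<union> Sr) - (Xl \<union> Xr))"
    using c1 c2 l1(4) r1(4) ts vv by blast
  have pm: "has_pm u ((Sl \<union> Sr) - (Xl \<union> Xr))" unfolding eq
    by (rule has_pm_union) (use has_pm_mono[OF el l1(5)] has_pm_mono[OF er r1(5)] l1(2) r1(2) D in auto)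
  show ?thesis unfolding finv_def using dom pm l1 r1 ts vv by blast
qed

lemma inv_attach:
  assumes l: "finv l Sl Xl" and r: "finv r Sr Xr" and D: "hV l \<inter> hV r = {}"
  shows "\<exists>S X. finv (Node Attach l r) S X"
proof -
  let ?v = "Node Attach l r"
  have l1: "hTS l \<subseteq> Sl" "Sl \<subseteq> hV l" "Xl \<subseteq> hTS l" "hV l - hTS l \<subseteq> cnbhd l (Sl - Xl)" "has_pm l (Sl - Xl)"
    using l unfolding finv_def by auto
  have r1: "hTS r \<subseteq> Sr" "Sr \<subseteq> hV r" "Xr \<subseteq> hTS r" "hV r - hTS r \<subseteq> cnbhd r (Sr - Xr)" "has_pm r (Sr - Xr)"
    using r unfolding finv_def by auto
  have TSl: "hTS l \<subseteq> hV l" and TSr: "hTS r \<subseteq> hV r" by (rule hTS_sub)+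
  have fXl: "finite Xl" using finite_subset[OF subset_trans[OF l1(3) TSl] hV_finite] .
  have fXr: "finite Xr" using finite_subset[OF subset_trans[OF r1(3) TSr] hV_finite] .
  define q where "q = min (card Xl) (card Xr)"
  have "q \<le> card Xl" unfolding q_def by simp
  then obtain Al where Al: "Al \<subseteq> Xl" "card Al = q" "finite Al" by (rule obtain_subset_with_card_n)
  have "q \<le> card Xr" unfolding q_def by simp
  then obtain Ar where Ar: "Ar \<subseteq> Xr" "card Ar = q" "finite Ar" by (rule obtain_subset_with_card_n)
  have AA: "Al = Xl \<or> Ar = Xr"
  proof (cases "card Xl \<le> card Xr")
    case True then have "card Al = card Xl" using Al q_def by simp
    then show ?thesis using card_subset_eq[OF fXl Al(1)] by blast
  next
    case False then have "card Ar = card Xr" using Ar q_def by simp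
    then show ?thesis using card_subset_eq[OF fXr Ar(1)] by blast
  qed
  define S where "S = Sl \<union> (Sr - (Xr - Ar))"
  define X where "X = Xl - Al"
  have eq: "S - X = (Sl - Xl) \<union> ((Sr - Xr) \<union> (Al \<union> Ar))"
    unfolding S_def X_def using l1 r1 Al Ar D TSl TSr by blast
  have pmA: "has_pm ?v (Al \<union> Ar)"
  proof (rule has_pm_pairs)
    show "Al \<inter> Ar = {}" using Al(1) Ar(1) l1(3) r1(3) D TSl TSr by blast
  qed (use Al Ar l1 r1 in auto)
  have pm2: "has_pm ?v ((Sr - Xr) \<union> (Al \<union> Ar))"
  proof (rule has_pm_union)
    show "has_pm ?v (Sr - Xr)" by (rule has_pm_mono[OF hE_r r1(5)])
    show "(Sr - Xr) \<inter> (Al \<union> Ar) = {}" using Al(1) Ar(1) l1(3) r1(2) D TSl by blast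
  qed (rule pmA)
  have pm: "has_pm ?v (S - X)" unfolding eq
  proof (rule has_pm_union)
    show "has_pm ?v (Sl - Xl)" by (rule has_pm_mono[OF hE_l l1(5)])
    show "(Sl - Xl) \<inter> ((Sr - Xr) \<union> (Al \<union> Ar)) = {}" using Al(1) Ar(1) l1(2) r1(2,3) D TSr by blast
  qed (rule pm2)
  have c1: "cnbhd l (Sl - Xl) \<subseteq> cnbhd ?v (S - X)"
    by (rule cnbhd_mono) (use eq hE_l in auto)
  have c2: "cnbhd r (Sr - Xr) \<subseteq> cnbhd ?v (S - X)"
    by (rule cnbhd_mono) (use eq hE_r in auto)
  have c3: "hTS r \<subseteq> cnbhd ?v (S - X)"
  proof
    fix x assume x: "x \<in> hTS r"
    show "x \<in> cnbhd ?v (S - X)"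
    proof (cases "Al = Xl")
      case True
      obtain t where t: "t \<in> hTS l" using hTS_ne[of l] by blast
      have "X = {}" unfolding X_def using True by simp
      moreover have "t \<in> S" using t l1(1) unfolding S_def by blast
      ultimately have "t \<in> S - X" by simp
      moreover have "{t, x} \<in> {{u, w} | u w. u \<in> hTS l \<and> w \<in> hTS r}" using t x by (intro CollectI exI conjI) (rule refl | assumption)+
      then have "{t, x} \<in> hE ?v" by simp
      moreover have "x \<in> hV ?v" using x TSr by (simp add: subset_iff)
      ultimately show ?thesis unfolding cnbhd_def by (intro UnI2 CollectI conjI bexI)
    next
      case False
      then have "Ar = Xr" using AA by blast
      have "x \<in> Sr" using x r1(1) by blast
      then have "x \<in> S" unfolding S_def using \<open>Ar = Xr\<close> by simp
      moreover have "x \<notin> X" using x TSr TSl l1(3) D unfolding X_def by blast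
      ultimately have "x \<in> S - X" by simp
      then show ?thesis using cnbhd_self[of "S - X" ?v] by (rule subsetD[rotated])
    qed
  qed
  have "hV ?v - hTS ?v = (hV l - hTS l) \<union> (hV r - hTS r) \<union> hTS r" using D TSl TSr by auto
  then have dom: "hV ?v - hTS ?v \<subseteq> cnbhd ?v (S - X)"
    using c1 c2 c3 l1(4) r1(4) by (simp only:) blast
  have "hTS ?v \<subseteq> S" using l1(1) unfolding S_def by simp blast
  moreover have "S \<subseteq> hV ?v" using l1(2) r1(2) unfolding S_def by auto
  moreover have "X \<subseteq> hTS ?v" using l1(3) unfolding X_def by auto
  ultimately have "finv ?v S X" unfolding finv_def using dom pm by blast
  then show ?thesis by blast
qed

lemma exists_inv: "wf_dtree u \<Longrightarrow> \<exists>S X. finv u S X"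
proof (induction u)
  case (Leaf x)
  have "finv (Leaf x) {x} {x}" unfolding finv_def using has_pm_empty by auto
  then show ?case by blast
next
  case (Node c l r)
  then obtain Sl Xl Sr Xr where l: "finv l Sl Xl" and r: "finv r Sr Xr" and D: "hV l \<inter> hV r = {}" by auto
  show ?case
  proof (cases c)
    case TrueTwin
    then show ?thesis using inv_twin[OF l r D, of "Node c l r"] hE_l[of l c r] hE_r[of r c l] by auto
  next
    case FalseTwin
    then show ?thesis using inv_twin[OF l r D, of "Node c l r"] hE_l[of l c r] hE_r[of r c l] by auto
  next
    case Attach
    then show ?thesis using inv_attach[OF l r D] by simp
  qed
qed



lemma gamma_le: "k_feasible u k S \<Longrightarrow> hgamma k u \<le> enat (card S)"
  unfolding hgamma_def by (rule INF_lower) simp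

lemma gamma_att:
  assumes "hgamma k u \<noteq> \<infinity>"
  shows "\<exists>S. k_feasible u k S \<and> hgamma k u = enat (card S)"
proof -
  let ?A = "(\<lambda>S. enat (card S)) ` {S. k_feasible u k S}"
  have hg: "hgamma k u = Inf ?A" unfolding hgamma_def by simp
  have "?A \<noteq> {}"
  proof
    assume "?A = {}"
    then have "hgamma k u = \<infinity>" unfolding hg by (simp add: Inf_enat_def)
    then show False using assms by simp
  qed
  then have "Inf ?A = (LEAST x. x \<in> ?A)" unfolding Inf_enat_def by (rule if_not_P)
  moreover have "(LEAST x. x \<in> ?A) \<in> ?A" using \<open>?A \<noteq> {}\<close> by (metis LeastI ex_in_conv)
  ultimately have "hgamma k u \<in> ?A" using hg by simp
  then show ?thesis by blast
qed

lemma feas_fin: "k_feasible u k S \<Longrightarrow> finite S"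
proof -
  assume "k_feasible u k S"
  then have "S \<subseteq> hV u" unfolding k_feasible_def by blast
  then show ?thesis by (rule finite_subset[OF _ hV_finite])
qed

lemma fin_TS: "finite (hTS u)" by (rule finite_subset[OF hTS_sub hV_finite])

lemma feas_card: "k_feasible u k S \<Longrightarrow> k \<le> card (hTS u)"
proof -
  assume "k_feasible u k S"
  then obtain X where "X \<subseteq> hTS u" "card X = k" unfolding k_feasible_def by blast
  then show ?thesis using card_mono[OF fin_TS] by metis
qed

lemma inv_feas: "finv u S X \<Longrightarrow> k_feasible u (card X) S"
proof -
  assume i: "finv u S X"
  then have "cnbhd u (S - X) \<subseteq> cnbhd u S" by (intro cnbhd_mono) auto
  moreover have "hTS u \<subseteq> S" "S \<subseteq> hV u" "X \<subseteq> hTS u" "hV u - hTS u \<subseteq> cnbhd u (S - X)" "has_pm u (S - X)"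
    using i unfolding finv_def by auto
  ultimately have "S \<subseteq> hV u" "hV u - hTS u \<subseteq> cnbhd u S" "X \<subseteq> S \<inter> hTS u" "card X = card X" "has_pm u (S - X)"
    by auto
  then show ?thesis unfolding k_feasible_def by blast
qed

lemma finite_img: "finite ((\<lambda>k. hgamma k u) ` {0..card (hTS u)})" by simp

lemma hmin_le: "k \<le> card (hTS u) \<Longrightarrow> hmin u \<le> hgamma k u"
  unfolding hmin_def by (rule Min_le) auto

lemma hmin_fin: "wf_dtree u \<Longrightarrow> hmin u \<noteq> \<infinity>"
proof -
  assume "wf_dtree u"
  then obtain S X where "finv u S X" using exists_inv by blast
  then have f: "k_feasible u (card X) S" by (rule inv_feas)
  then have "card X \<le> card (hTS u)" by (rule feas_card)
  then have "hmin u \<le> hgamma (card X) u" by (rule hmin_le)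
  also have "\<dots> \<le> enat (card S)" using f by (rule gamma_le)
  finally show ?thesis by (metis infinity_ileE)
qed

lemma set_props: "finite {k. k \<le> card (hTS u) \<and> hgamma k u = hmin u}"
      "{k. k \<le> card (hTS u) \<and> hgamma k u = hmin u} \<noteq> {}"
proof -
  show "finite {k. k \<le> card (hTS u) \<and> hgamma k u = hmin u}" by simp
  have "hmin u \<in> (\<lambda>k. hgamma k u) ` {0..card (hTS u)}" unfolding hmin_def
    by (rule Min_in) auto
  then show "{k. k \<le> card (hTS u) \<and> hgamma k u = hmin u} \<noteq> {}" by auto
qed

lemma halpha_le: "halpha u \<le> card (hTS u)"
proof -
  have "halpha u \<in> {k. k \<le> card (hTS u) \<and> hgamma k u = hmin u}"
    unfolding halpha_def by (rule Min_in[OF set_props])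
  then show ?thesis by simp
qed

lemma hbeta_le: "hbeta u \<le> card (hTS u)"
proof -
  have "hbeta u \<in> {k. k \<le> card (hTS u) \<and> hgamma k u = hmin u}"
    unfolding hbeta_def by (rule Max_in[OF set_props])
  then show ?thesis by simp
qed

lemma P_spec:
  assumes P: "prop_P u" and k: "k \<le> card (hTS u)"
  shows "(k \<le> halpha u \<longrightarrow> hgamma k u = hmin u + enat (halpha u - k))
    \<and> (k \<ge> hbeta u \<longrightarrow> hgamma k u = hmin u + enat (k - hbeta u))
    \<and> (halpha u < k \<and> k < hbeta u \<and> even (k - halpha u) \<longrightarrow> hgamma k u = hmin u)
    \<and> (\<not> (k \<le> halpha u) \<and> \<not> (k \<ge> hbeta u) \<and> \<not> (halpha u < k \<and> k < hbeta u \<and> even (k - halpha u))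
         \<longrightarrow> hgamma k u = hmin u + 1)"
proof -
  have "\<forall>k \<le> card (hTS u).
      (k \<le> halpha u \<longrightarrow> hgamma k u = hmin u + enat (halpha u - k))
    \<and> (k \<ge> hbeta u \<longrightarrow> hgamma k u = hmin u + enat (k - hbeta u))
    \<and> (halpha u < k \<and> k < hbeta u \<and> even (k - halpha u) \<longrightarrow> hgamma k u = hmin u)
    \<and> (\<not> (k \<le> halpha u) \<and> \<not> (k \<ge> hbeta u) \<and> \<not> (halpha u < k \<and> k < hbeta u \<and> even (k - halpha u))
         \<longrightarrow> hgamma k u = hmin u + 1)" using P unfolding prop_P_def .
  then show ?thesis using k by blast
qed

lemma P_fin:
  assumes P: "prop_P u" and f: "hmin u \<noteq> \<infinity>" and k: "k \<le> card (hTS u)"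
  shows "hgamma k u \<noteq> \<infinity>"
proof -
  obtain n where n: "hmin u = enat n" using f by auto
  have "hgamma k u = hmin u + enat (halpha u - k) \<or> hgamma k u = hmin u + enat (k - hbeta u) \<or> hgamma k u = hmin u \<or> hgamma k u = hmin u + 1"
    using P_spec[OF P k] by blast
  then show ?thesis by (auto simp: n one_enat_def)
qed

lemma P_F1: "prop_P u \<Longrightarrow> hbeta u \<le> j \<Longrightarrow> j \<le> card (hTS u) \<Longrightarrow> hgamma j u = hmin u + enat (j - hbeta u)"
  using P_spec by blast

lemma P_F2: "prop_P u \<Longrightarrow> j \<le> halpha u \<Longrightarrow> hgamma j u = hmin u + enat (halpha u - j)"
proof -
  assume "prop_P u" "j \<le> halpha u"
  moreover have "j \<le> card (hTS u)" using calculation(2) halpha_le[of u] by linarith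
  ultimately show ?thesis using P_spec by blast
qed



lemma compose:
  assumes D: "hV l \<inter> hV r = {}" and fl: "k_feasible l m Sl" and fr: "k_feasible r m Sr" and m: "1 \<le> m"
  shows "k_feasible (Node Attach l r) 0 (Sl \<union> Sr)"
proof -
  let ?v = "Node Attach l r"
  have TSl: "hTS l \<subseteq> hV l" and TSr: "hTS r \<subseteq> hV r" by (rule hTS_sub)+
  obtain Xl where l1: "Sl \<subseteq> hV l" "hV l - hTS l \<subseteq> cnbhd l Sl" "Xl \<subseteq> Sl \<inter> hTS l" "card Xl = m" "has_pm l (Sl - Xl)"
    using fl unfolding k_feasible_def by blast
  obtain Xr where r1: "Sr \<subseteq> hV r" "hV r - hTS r \<subseteq> cnbhd r Sr" "Xr \<subseteq> Sr \<inter> hTS r" "card Xr = m" "has_pm r (Sr - Xr)"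
    using fr unfolding k_feasible_def by blast
  have fXl: "finite Xl" using finite_subset[OF _ fin_TS[of l]] l1(3) by blast
  have fXr: "finite Xr" using finite_subset[OF _ fin_TS[of r]] r1(3) by blast
  have eq: "Sl \<union> Sr = (Sl - Xl) \<union> ((Sr - Xr) \<union> (Xl \<union> Xr))" using l1(3) r1(3) by blast
  have pmA: "has_pm ?v (Xl \<union> Xr)"
  proof (rule has_pm_pairs)
    show "Xl \<inter> Xr = {}" using l1(3) r1(3) D TSl TSr by blast
  qed (use l1 r1 fXl fXr in auto)
  have pm2: "has_pm ?v ((Sr - Xr) \<union> (Xl \<union> Xr))"
  proof (rule has_pm_union)
    show "has_pm ?v (Sr - Xr)" by (rule has_pm_mono[OF hE_r r1(5)])
    show "(Sr - Xr) \<inter> (Xl \<union> Xr) = {}" using l1(3) r1(1) D TSl by blast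
  qed (rule pmA)
  have pm: "has_pm ?v ((Sl \<union> Sr) - {})" unfolding Diff_empty eq
  proof (rule has_pm_union)
    show "has_pm ?v (Sl - Xl)" by (rule has_pm_mono[OF hE_l l1(5)])
    show "(Sl - Xl) \<inter> ((Sr - Xr) \<union> (Xl \<union> Xr)) = {}" using l1(1) r1(1,3) D TSr by blast
  qed (rule pm2)
  have c1: "cnbhd l Sl \<subseteq> cnbhd ?v (Sl \<union> Sr)" by (rule cnbhd_mono) (use hE_l in auto)
  have c2: "cnbhd r Sr \<subseteq> cnbhd ?v (Sl \<union> Sr)" by (rule cnbhd_mono) (use hE_r in auto)
  have c3: "hTS r \<subseteq> cnbhd ?v (Sl \<union> Sr)"
  proof
    fix x assume x: "x \<in> hTS r"
    have "Xl \<noteq> {}" using l1(4) m by auto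
    then obtain t where t: "t \<in> Xl" by blast
    then have t1: "t \<in> hTS l" "t \<in> Sl \<union> Sr" using l1(3) by blast+
    have "{t, x} \<in> {{u, w} | u w. u \<in> hTS l \<and> w \<in> hTS r}" using t1 x by (intro CollectI exI conjI) (rule refl | assumption)+
    then have "{t, x} \<in> hE ?v" by simp
    moreover have "x \<in> hV ?v" using x TSr by (simp add: subset_iff)
    ultimately have "x \<in> {w \<in> hV ?v. \<exists>s\<in>Sl \<union> Sr. {s, w} \<in> hE ?v}" using t1(2) by blast
    then show "x \<in> cnbhd ?v (Sl \<union> Sr)" unfolding cnbhd_def by (rule UnI2)
  qed
  have "hV ?v - hTS ?v = (hV l - hTS l) \<union> (hV r - hTS r) \<union> hTS r" using D TSl TSr by auto
  then have dom: "hV ?v - hTS ?v \<subseteq> cnbhd ?v (Sl \<union> Sr)"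
    using c1 c2 c3 l1(2) r1(2) by (simp only:) blast
  have "Sl \<union> Sr \<subseteq> hV ?v" using l1(1) r1(1) by auto
  moreover have "{} \<subseteq> (Sl \<union> Sr) \<inter> hTS ?v \<and> card {} = (0::nat) \<and> has_pm ?v ((Sl \<union> Sr) - {})" using pm by simp
  ultimately show ?thesis unfolding k_feasible_def using dom by blast
qed

lemma arith_core:
  fixes f g :: "nat \<Rightarrow> nat"
  assumes ba: "b < a" and acr: "a \<le> cr" and mk: "m + k \<le> cl" and mcr: "m \<le> cr" and k: "1 \<le> k"
    and F1: "\<And>j. b \<le> j \<Longrightarrow> j \<le> cl \<Longrightarrow> f j = F + (j - b)"
    and F2: "\<And>j. j \<le> a \<Longrightarrow> g j = G + (a - j)"
  shows "\<exists>m'. 1 \<le> m' \<and> m' \<le> cl \<and> m' \<le> cr \<and> f m' + g m' < f (m + k) + g m"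
proof (cases "a \<le> m")
  case True
  have "f m = F + (m - b)" using F1 True ba mk by auto
  moreover have "f (m + k) = F + (m + k - b)" using F1 True ba mk by auto
  ultimately have "f m + g m < f (m + k) + g m" using True ba k by auto
  then show ?thesis using True ba mk mcr by (intro exI[of _ m]) auto
next
  case False
  show ?thesis
  proof (cases "m + k \<le> a")
    case True
    have "g (m + k) = G + (a - (m + k))" using F2 True by auto
    moreover have "g m = G + (a - m)" using F2 False by auto
    ultimately have "f (m + k) + g (m + k) < f (m + k) + g m" using True False k by auto
    then show ?thesis using True k mk acr by (intro exI[of _ "m + k"]) auto
  next
    case False2: False
    have "f a = F + (a - b)" using F1 ba False2 mk by auto
    moreover have "f (m + k) = F + (m + k - b)" using F1 ba False2 mk by auto
    moreover have "g a = G" using F2 by auto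
    moreover have "g m = G + (a - m)" using F2 False by auto
    ultimately have "f a + g a < f (m + k) + g m" using False2 ba by auto
    then show ?thesis using False2 ba acr mk by (intro exI[of _ a]) auto
  qed
qed



lemma card_cross:
  assumes fin: "finite Mc" and disj: "\<forall>e\<in>Mc. \<forall>e'\<in>Mc. e \<noteq> e' \<longrightarrow> e \<inter> e' = {}"
    and one: "\<And>e. e \<in> Mc \<Longrightarrow> \<exists>z. e \<inter> W = {z}"
  shows "card (\<Union>Mc \<inter> W) = card Mc"
proof -
  have "\<Union>Mc \<inter> W = \<Union>((\<lambda>e. e \<inter> W) ` Mc)" by blast
  moreover have "card (\<Union>((\<lambda>e. e \<inter> W) ` Mc)) = (\<Sum>e\<in>Mc. card (e \<inter> W))"
  proof (rule card_UN_disjoint[OF fin])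
    show "\<forall>e\<in>Mc. finite (e \<inter> W)" using one by (metis finite.emptyI finite.insertI)
    show "\<forall>i\<in>Mc. \<forall>j\<in>Mc. i \<noteq> j \<longrightarrow> i \<inter> W \<inter> (j \<inter> W) = {}" using disj by blast
  qed
  moreover have "(\<Sum>e\<in>Mc. card (e \<inter> W)) = (\<Sum>e\<in>Mc. 1)"
  proof (rule sum.cong)
    fix e assume "e \<in> Mc"
    then obtain z where "e \<inter> W = {z}" using one by blast
    then show "card (e \<inter> W) = 1" by simp
  qed simp
  ultimately show ?thesis by simp
qed

lemma decomp:
  assumes D: "hV l \<inter> hV r = {}" and F: "k_feasible (Node Attach l r) k S"
  shows "\<exists>m. k_feasible l (k + m) (S \<inter> hV l) \<and> k_feasible r m (S \<inter> hV r)"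
proof -
  let ?v = "Node Attach l r"
  define C where "C = {{u, w} | u w. u \<in> hTS l \<and> w \<in> hTS r}"
  have hEv: "hE ?v = hE l \<union> hE r \<union> C" unfolding C_def by simp
  have TSl: "hTS l \<subseteq> hV l" and TSr: "hTS r \<subseteq> hV r" by (rule hTS_sub)+
  have hVv: "hV ?v = hV l \<union> hV r" by simp
  have hTSv: "hTS ?v = hTS l" by simp
  obtain X where S1: "S \<subseteq> hV ?v" and dom: "hV ?v - hTS ?v \<subseteq> cnbhd ?v S"
    and X1: "X \<subseteq> S \<inter> hTS ?v" and X2: "card X = k" and pmS: "has_pm ?v (S - X)"
    using F unfolding k_feasible_def by (elim conjE exE)
  obtain M where M1: "M \<subseteq> hE ?v" and M2: "\<forall>e\<in>M. e \<subseteq> S - X"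
    and M3: "\<forall>e\<in>M. \<forall>e'\<in>M. e \<noteq> e' \<longrightarrow> e \<inter> e' = {}" and M4: "\<Union>M = S - X"
    using pmS unfolding has_pm_def by (elim conjE exE)
  have XV: "X \<subseteq> hV l" using X1 TSl hTSv by blast
  have Cform: "\<And>e. e \<in> C \<Longrightarrow> \<exists>u w. e = {u, w} \<and> u \<in> hTS l \<and> w \<in> hTS r" unfolding C_def by blast
  have El: "\<And>e. e \<in> hE l \<Longrightarrow> e \<subseteq> hV l" by (rule hE_sub)
  have Er: "\<And>e. e \<in> hE r \<Longrightarrow> e \<subseteq> hV r" by (rule hE_sub)
  define Mc where "Mc = M \<inter> C"
  define Ml where "Ml = M \<inter> hE l"
  define Mr where "Mr = M \<inter> hE r"
  define Y where "Y = \<Union>Mc \<inter> hV r"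
  define Z where "Z = \<Union>Mc \<inter> hV l"
  have finM: "finite M"
  proof -
    have "M \<subseteq> Pow (hV ?v)" using M1 hE_sub by blast
    moreover have "finite (Pow (hV ?v))" using hV_finite[of ?v] by simp
    ultimately show ?thesis by (rule finite_subset)
  qed
  have finMc: "finite Mc" unfolding Mc_def using finM by simp
  have disjMc: "\<forall>e\<in>Mc. \<forall>e'\<in>Mc. e \<noteq> e' \<longrightarrow> e \<inter> e' = {}" unfolding Mc_def using M3 by blast
  have oneL: "\<And>e. e \<in> Mc \<Longrightarrow> \<exists>z. e \<inter> hV l = {z}"
  proof -
    fix e assume "e \<in> Mc"
    then obtain u w where "e = {u, w}" "u \<in> hTS l" "w \<in> hTS r" using Cform unfolding Mc_def by blast
    moreover have "u \<in> hV l" "w \<notin> hV l" using \<open>u \<in> hTS l\<close> \<open>w \<in> hTS r\<close> TSl TSr D by blast+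
    ultimately have "e \<inter> hV l = {u}" by auto
    then show "\<exists>z. e \<inter> hV l = {z}" by blast
  qed
  have oneR: "\<And>e. e \<in> Mc \<Longrightarrow> \<exists>z. e \<inter> hV r = {z}"
  proof -
    fix e assume "e \<in> Mc"
    then obtain u w where "e = {u, w}" "u \<in> hTS l" "w \<in> hTS r" using Cform unfolding Mc_def by blast
    moreover have "w \<in> hV r" "u \<notin> hV r" using \<open>u \<in> hTS l\<close> \<open>w \<in> hTS r\<close> TSl TSr D by blast+
    ultimately have "e \<inter> hV r = {w}" by auto
    then show "\<exists>z. e \<inter> hV r = {z}" by blast
  qed
  have cZ: "card Z = card Mc" unfolding Z_def by (rule card_cross[OF finMc disjMc oneL])
  have cY: "card Y = card Mc" unfolding Y_def by (rule card_cross[OF finMc disjMc oneR])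
  have McS: "\<Union>Mc \<subseteq> S - X" unfolding Mc_def using M2 by blast
  have ZTS: "Z \<subseteq> hTS l"
  proof
    fix z assume "z \<in> Z"
    then obtain e where e: "e \<in> Mc" "z \<in> e" "z \<in> hV l" unfolding Z_def by blast
    then obtain u w where "e = {u, w}" "u \<in> hTS l" "w \<in> hTS r" using Cform unfolding Mc_def by blast
    then show "z \<in> hTS l" using e TSr D by blast
  qed
  have YTS: "Y \<subseteq> hTS r"
  proof
    fix z assume "z \<in> Y"
    then obtain e where e: "e \<in> Mc" "z \<in> e" "z \<in> hV r" unfolding Y_def by blast
    then obtain u w where "e = {u, w}" "u \<in> hTS l" "w \<in> hTS r" using Cform unfolding Mc_def by blast
    then show "z \<in> hTS r" using e TSl D by blast
  qed
  have cls: "\<And>x. x \<in> S - X \<Longrightarrow> \<exists>e\<in>M. x \<in> e" using M4 by blast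
  have Mcases: "\<And>e. e \<in> M \<Longrightarrow> e \<in> Ml \<or> e \<in> Mr \<or> e \<in> Mc" using M1 hEv unfolding Ml_def Mr_def Mc_def by blast
  have pmR: "has_pm r ((S \<inter> hV r) - Y)"
  proof (rule has_pm_intro)
    show "\<forall>e\<in>Mr. \<forall>e'\<in>Mr. e \<noteq> e' \<longrightarrow> e \<inter> e' = {}" unfolding Mr_def using M3 by blast
    show "Mr \<subseteq> hE r" unfolding Mr_def by blast
    have sub: "\<forall>e\<in>Mr. e \<subseteq> (S \<inter> hV r) - Y"
    proof
      fix e assume e: "e \<in> Mr"
      have e1: "e \<subseteq> S" "e \<subseteq> hV r" using e M2 Er unfolding Mr_def by blast+
      have "e \<inter> Y = {}"
      proof (rule ccontr)
        assume "e \<inter> Y \<noteq> {}"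
        then obtain y e' where y: "y \<in> e" "y \<in> e'" "e' \<in> Mc" unfolding Y_def by blast
        then obtain u w where uw: "e' = {u, w}" "u \<in> hTS l" "w \<in> hTS r" using Cform unfolding Mc_def by blast
        then have "u \<in> e'" "u \<notin> e" using e1(2) TSl D by blast+
        then have "e' \<noteq> e" by blast
        then have "e \<inter> e' = {}" using M3 e y(3) unfolding Mr_def Mc_def by blast
        then show False using y by blast
      qed
      then show "e \<subseteq> (S \<inter> hV r) - Y" using e1 by blast
    qed
    then show "\<forall>e\<in>Mr. e \<subseteq> (S \<inter> hV r) - Y" .
    show "\<Union>Mr = (S \<inter> hV r) - Y"
    proof
      show "\<Union>Mr \<subseteq> (S \<inter> hV r) - Y" using sub by blast
      show "(S \<inter> hV r) - Y \<subseteq> \<Union>Mr"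
      proof
        fix x assume x: "x \<in> (S \<inter> hV r) - Y"
        then have "x \<notin> X" using XV D by blast
        then obtain e where e: "e \<in> M" "x \<in> e" using cls x by blast
        have "e \<notin> Ml" using e x El D unfolding Ml_def by blast
        moreover have "e \<notin> Mc" using e x unfolding Y_def by blast
        ultimately have "e \<in> Mr" using Mcases e by blast
        then show "x \<in> \<Union>Mr" using e by blast
      qed
    qed
  qed
  have domR: "hV r - hTS r \<subseteq> cnbhd r (S \<inter> hV r)"
  proof
    fix x assume x: "x \<in> hV r - hTS r"
    then have xl: "x \<notin> hV l" using D by blast
    then have "x \<in> hV ?v - hTS ?v" using x TSl by auto
    then have "x \<in> cnbhd ?v S" using dom by blast
    then consider "x \<in> S" | s where "s \<in> S" "{s, x} \<in> hE ?v" unfolding cnbhd_def by blast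
    then show "x \<in> cnbhd r (S \<inter> hV r)"
    proof cases
      case 1 then show ?thesis using x unfolding cnbhd_def by blast
    next
      case 2
      note s = this
      then consider "{s, x} \<in> hE l" | "{s, x} \<in> hE r" | "{s, x} \<in> C" using hEv by blast
      then show ?thesis
      proof cases
        case 1 then show ?thesis using El xl by blast
      next
        case 2
        then have "s \<in> hV r" using Er by blast
        then show ?thesis unfolding cnbhd_def using s 2 x by blast
      next
        case 3
        then obtain u w where uw: "{s, x} = {u, w}" "u \<in> hTS l" "w \<in> hTS r" using Cform by blast
        then have "x = u \<or> x = w" by (metis doubleton_eq_iff)
        then show ?thesis using uw x xl TSl by blast
      qed
    qed
  qed
  have "Y \<subseteq> (S \<inter> hV r) \<inter> hTS r" using YTS McS unfolding Y_def by blast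
  then have featR: "k_feasible r (card Y) (S \<inter> hV r)"
    unfolding k_feasible_def using domR pmR by blast
  have pmL: "has_pm l ((S \<inter> hV l) - (X \<union> Z))"
  proof (rule has_pm_intro)
    show "\<forall>e\<in>Ml. \<forall>e'\<in>Ml. e \<noteq> e' \<longrightarrow> e \<inter> e' = {}" unfolding Ml_def using M3 by blast
    show "Ml \<subseteq> hE l" unfolding Ml_def by blast
    have sub: "\<forall>e\<in>Ml. e \<subseteq> (S \<inter> hV l) - (X \<union> Z)"
    proof
      fix e assume e: "e \<in> Ml"
      have e1: "e \<subseteq> S - X" "e \<subseteq> hV l" using e M2 El unfolding Ml_def by blast+
      have "e \<inter> Z = {}"
      proof (rule ccontr)
        assume "e \<inter> Z \<noteq> {}"
        then obtain y e' where y: "y \<in> e" "y \<in> e'" "e' \<in> Mc" unfolding Z_def by blast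
        then obtain u w where uw: "e' = {u, w}" "u \<in> hTS l" "w \<in> hTS r" using Cform unfolding Mc_def by blast
        then have "w \<in> e'" "w \<notin> e" using e1(2) TSr D by blast+
        then have "e' \<noteq> e" by blast
        then have "e \<inter> e' = {}" using M3 e y(3) unfolding Ml_def Mc_def by blast
        then show False using y by blast
      qed
      then show "e \<subseteq> (S \<inter> hV l) - (X \<union> Z)" using e1 by blast
    qed
    then show "\<forall>e\<in>Ml. e \<subseteq> (S \<inter> hV l) - (X \<union> Z)" .
    show "\<Union>Ml = (S \<inter> hV l) - (X \<union> Z)"
    proof
      show "\<Union>Ml \<subseteq> (S \<inter> hV l) - (X \<union> Z)" using sub by blast
      show "(S \<inter> hV l) - (X \<union> Z) \<subseteq> \<Union>Ml"
      proof
        fix x assume x: "x \<in> (S \<inter> hV l) - (X \<union> Z)"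
        then obtain e where e: "e \<in> M" "x \<in> e" using cls by blast
        have "e \<notin> Mr" using e x Er D unfolding Mr_def by blast
        moreover have "e \<notin> Mc" using e x unfolding Z_def by blast
        ultimately have "e \<in> Ml" using Mcases e by blast
        then show "x \<in> \<Union>Ml" using e by blast
      qed
    qed
  qed
  have domL: "hV l - hTS l \<subseteq> cnbhd l (S \<inter> hV l)"
  proof
    fix x assume x: "x \<in> hV l - hTS l"
    then have xr: "x \<notin> hV r" using D by blast
    have "x \<in> hV ?v - hTS ?v" using x by simp
    then have "x \<in> cnbhd ?v S" using dom by blast
    then consider "x \<in> S" | s where "s \<in> S" "{s, x} \<in> hE ?v" unfolding cnbhd_def by blast
    then show "x \<in> cnbhd l (S \<inter> hV l)"
    proof cases
      case 1 then show ?thesis using x unfolding cnbhd_def by blast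
    next
      case 2
      note s = this
      then consider "{s, x} \<in> hE l" | "{s, x} \<in> hE r" | "{s, x} \<in> C" using hEv by blast
      then show ?thesis
      proof cases
        case 1
        then have "s \<in> hV l" using El by blast
        then show ?thesis unfolding cnbhd_def using s 1 x by blast
      next
        case 2
        then show ?thesis using Er xr by blast
      next
        case 3
        then obtain u w where uw: "{s, x} = {u, w}" "u \<in> hTS l" "w \<in> hTS r" using Cform by blast
        then have "x = u \<or> x = w" by (metis doubleton_eq_iff)
        then show ?thesis using uw x xr TSr by blast
      qed
    qed
  qed
  have XZ: "X \<inter> Z = {}" using McS unfolding Z_def by blast
  have finX: "finite X" using finite_subset[OF _ fin_TS[of l]] X1 hTSv by blast
  have finZ: "finite Z" using finite_subset[OF ZTS fin_TS] .
  have cXZ: "card (X \<union> Z) = k + card Y" using card_Un_disjoint[OF finX finZ XZ] X2 cZ cY by simp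
  have XZsub: "X \<union> Z \<subseteq> (S \<inter> hV l) \<inter> hTS l" using X1 hTSv TSl ZTS McS unfolding Z_def by blast
  have featL: "k_feasible l (k + card Y) (S \<inter> hV l)"
    unfolding k_feasible_def using domL pmL XZsub cXZ by blast
  show ?thesis using featL featR by blast
qed



theorem lemma40:
  fixes T vl vr :: "'a dtree" and V :: "'a set" and E :: "'a set set"
  assumes "distance_hereditary V E"
    and "decomp_tree T V E"
    and "Node Attach vl vr \<in> subtrees T"
    and "prop_P vl" and "prop_P vr"
    and "halpha vr > hbeta vl"
  shows "hbeta (Node Attach vl vr) = 0"
proof -
  let ?v = "Node Attach vl vr"
  have wfT: "wf_dtree T" using assms(2) unfolding decomp_tree_def by blast
  have wfv: "wf_dtree ?v" by (rule wf_sub[OF assms(3) wfT])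
  then have wl: "wf_dtree vl" and wr: "wf_dtree vr" and D: "hV vl \<inter> hV vr = {}" by simp_all
  obtain Fm where Fm: "hmin vl = enat Fm" using hmin_fin[OF wl] by auto
  obtain Gm where Gm: "hmin vr = enat Gm" using hmin_fin[OF wr] by auto
  define cl where "cl = card (hTS vl)"
  define cr where "cr = card (hTS vr)"
  have cl1: "1 \<le> cl" unfolding cl_def using hTS_ne[of vl] fin_TS[of vl]
    by (simp add: Suc_le_eq card_gt_0_iff)
  have cr1: "1 \<le> cr" unfolding cr_def using hTS_ne[of vr] fin_TS[of vr]
    by (simp add: Suc_le_eq card_gt_0_iff)
  define f where "f j = the_enat (hgamma j vl)" for j
  define g where "g j = the_enat (hgamma j vr)" for j
  have fE: "hgamma j vl = enat (f j)" if "j \<le> cl" for j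
  proof -
    have "hgamma j vl \<noteq> \<infinity>" using P_fin[OF assms(4) hmin_fin[OF wl]] that unfolding cl_def by blast
    then show ?thesis unfolding f_def by auto
  qed
  have gE: "hgamma j vr = enat (g j)" if "j \<le> cr" for j
  proof -
    have "hgamma j vr \<noteq> \<infinity>" using P_fin[OF assms(5) hmin_fin[OF wr]] that unfolding cr_def by blast
    then show ?thesis unfolding g_def by auto
  qed
  define a where "a = halpha vr"
  define b where "b = hbeta vl"
  have ba: "b < a" using assms(6) unfolding a_def b_def by simp
  have acr: "a \<le> cr" unfolding a_def cr_def by (rule halpha_le)
  have F1: "f j = Fm + (j - b)" if "b \<le> j" "j \<le> cl" for j
  proof -
    have "enat (f j) = hgamma j vl" using fE that by simp
    also have "\<dots> = hmin vl + enat (j - b)" using P_F1[OF assms(4)] that unfolding b_def cl_def by blast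
    finally show ?thesis using Fm by simp
  qed
  have F2: "g j = Gm + (a - j)" if "j \<le> a" for j
  proof -
    have "enat (g j) = hgamma j vr" using gE that acr by simp
    also have "\<dots> = hmin vr + enat (a - j)" using P_F2[OF assms(5)] that unfolding a_def by blast
    finally show ?thesis using Gm by simp
  qed
  have opt: "hgamma 0 ?v \<le> enat (f m' + g m')" if m': "1 \<le> m'" "m' \<le> cl" "m' \<le> cr" for m'
  proof -
    obtain Sl where Sl: "k_feasible vl m' Sl" "hgamma m' vl = enat (card Sl)"
      using gamma_att[of m' vl] fE[OF m'(2)] by auto
    obtain Sr where Sr: "k_feasible vr m' Sr" "hgamma m' vr = enat (card Sr)"
      using gamma_att[of m' vr] gE[OF m'(3)] by auto
    have cSl: "card Sl = f m'" using Sl(2) fE[OF m'(2)] by simp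
    have cSr: "card Sr = g m'" using Sr(2) gE[OF m'(3)] by simp
    have feas: "k_feasible ?v 0 (Sl \<union> Sr)" by (rule compose[OF D Sl(1) Sr(1) m'(1)])
    have "Sl \<subseteq> hV vl" "Sr \<subseteq> hV vr" using Sl(1) Sr(1) unfolding k_feasible_def by blast+
    then have "Sl \<inter> Sr = {}" using D by blast
    then have "card (Sl \<union> Sr) = card Sl + card Sr"
      using card_Un_disjoint[OF feas_fin[OF Sl(1)] feas_fin[OF Sr(1)]] by simp
    then show ?thesis using gamma_le[OF feas] cSl cSr by simp
  qed
  have g0fin: "hgamma 0 ?v < \<infinity>"
  proof -
    have "hgamma 0 ?v \<le> enat (f 1 + g 1)" using opt cl1 cr1 by simp
    then show ?thesis using enat_ord_simps(4) by (metis infinity_ileE le_less_trans not_less)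
  qed
  have strict: "hgamma 0 ?v < hgamma k ?v" if k: "1 \<le> k" "k \<le> cl" for k
  proof (cases "hgamma k ?v = \<infinity>")
    case True then show ?thesis using g0fin by simp
  next
    case False
    then obtain S where S: "k_feasible ?v k S" "hgamma k ?v = enat (card S)" using gamma_att by blast
    obtain m where m: "k_feasible vl (k + m) (S \<inter> hV vl)" "k_feasible vr m (S \<inter> hV vr)"
      using decomp[OF D S(1)] by blast
    have mk: "m + k \<le> cl" using feas_card[OF m(1)] unfolding cl_def by simp
    have mcr: "m \<le> cr" using feas_card[OF m(2)] unfolding cr_def by simp
    obtain m' where m': "1 \<le> m'" "m' \<le> cl" "m' \<le> cr" "f m' + g m' < f (m + k) + g m"
      using arith_core[OF ba acr mk mcr k(1) F1 F2] by blast
    have l1: "enat (f (m + k)) \<le> enat (card (S \<inter> hV vl))"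
      using gamma_le[OF m(1)] fE[OF mk] by (simp add: add.commute)
    have r1: "enat (g m) \<le> enat (card (S \<inter> hV vr))"
      using gamma_le[OF m(2)] gE[OF mcr] by simp
    have SV: "S \<subseteq> hV vl \<union> hV vr" using S(1) unfolding k_feasible_def by simp
    have finS: "finite S" by (rule feas_fin[OF S(1)])
    have "S = (S \<inter> hV vl) \<union> (S \<inter> hV vr)" using SV by blast
    then have cS: "card S = card (S \<inter> hV vl) + card (S \<inter> hV vr)"
      using card_Un_disjoint[of "S \<inter> hV vl" "S \<inter> hV vr"] finS D by (metis finite_Int inf_assoc inf_bot_right inf_left_commute)
    have "hgamma 0 ?v \<le> enat (f m' + g m')" by (rule opt[OF m'(1-3)])
    also have "\<dots> < enat (f (m + k) + g m)" using m'(4) by simp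
    also have "\<dots> \<le> enat (card S)" using l1 r1 cS by simp
    finally show ?thesis using S(2) by simp
  qed
  have tsv: "hTS ?v = hTS vl" by simp
  have hm: "hmin ?v = hgamma 0 ?v" unfolding hmin_def
  proof (rule Min_eqI)
    show "finite ((\<lambda>k. hgamma k ?v) ` {0..card (hTS ?v)})" by simp
    show "hgamma 0 ?v \<in> (\<lambda>k. hgamma k ?v) ` {0..card (hTS ?v)}" by simp
    fix y assume "y \<in> (\<lambda>k. hgamma k ?v) ` {0..card (hTS ?v)}"
    then obtain k where "k \<le> cl" "y = hgamma k ?v" unfolding tsv cl_def by auto
    then show "hgamma 0 ?v \<le> y" using strict[of k] by (cases "k = 0") auto
  qed
  have "{k. k \<le> card (hTS ?v) \<and> hgamma k ?v = hmin ?v} = {0}"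
  proof
    show "{k. k \<le> card (hTS ?v) \<and> hgamma k ?v = hmin ?v} \<subseteq> {0}"
    proof
      fix k assume "k \<in> {k. k \<le> card (hTS ?v) \<and> hgamma k ?v = hmin ?v}"
      then have "k \<le> cl" "hgamma k ?v = hgamma 0 ?v" unfolding tsv cl_def hm by auto
      then show "k \<in> {0}" using strict[of k] by (cases "k = 0") auto
    qed
    show "{0} \<subseteq> {k. k \<le> card (hTS ?v) \<and> hgamma k ?v = hmin ?v}" using hm by simp
  qed
  then show ?thesis unfolding hbeta_def by simp
qed

end
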